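(* A triple $(A_1,A_2,A_3)\in V_3$ is similar to an upper triangular $3$-matrix if and only if $\sigma_{12}=\sigma_{13}=\sigma_{23}=\Delta_{123}=0$.
   Context: $V_3=(M_{2\times2}(\mathbb{C}))^{\times 3}$ with $GL(2,\mathbb{C})$ acting by simultaneous conjugation; similar means same orbit; upper triangular $3$-matrix means all components upper triangular. With $t_j=\mathsf{tr}(A_j)$, $t_{jk}=\mathsf{tr}(A_jA_k)$, $t_{jkl}=\mathsf{tr}(A_jA_kA_l)$, define $\tau_{jk}=t_{jk}-\tfrac12t_jt_k$, $\sigma_{jk}=\tau_{jk}^2-\tau_{jj}\tau_{kk}$ and $\Delta_{jkl}=(t_{jkl}-t_{lkj})^2$. *)

theory Defs
  imports "HOL-Analysis.Analysis"
begin

type_synonym cmat2 = "complex^2^2"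

definition upper_tri2 :: "cmat2 \<Rightarrow> bool" where
  "upper_tri2 M \<longleftrightarrow> M $ 2 $ 1 = 0"

definition similar3 :: "cmat2 \<times> cmat2 \<times> cmat2 \<Rightarrow> cmat2 \<times> cmat2 \<times> cmat2 \<Rightarrow> bool" where
  "similar3 A B \<longleftrightarrow> (\<exists>P::cmat2. invertible P \<and>
     fst B = P ** fst A ** matrix_inv P \<and>
     fst (snd B) = P ** fst (snd A) ** matrix_inv P \<and>
     snd (snd B) = P ** snd (snd A) ** matrix_inv P)"

definition upper_tri3 :: "cmat2 \<times> cmat2 \<times> cmat2 \<Rightarrow> bool" where
  "upper_tri3 B \<longleftrightarrow> upper_tri2 (fst B) \<and> upper_tri2 (fst (snd B)) \<and> upper_tri2 (snd (snd B))"

definition tau :: "cmat2 \<Rightarrow> cmat2 \<Rightarrow> complex" where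
  "tau X Y = trace (X ** Y) - trace X * trace Y / 2"

definition sigma :: "cmat2 \<Rightarrow> cmat2 \<Rightarrow> complex" where
  "sigma X Y = (tau X Y)^2 - tau X X * tau Y Y"

definition Delta :: "cmat2 \<Rightarrow> cmat2 \<Rightarrow> cmat2 \<Rightarrow> complex" where
  "Delta X Y Z = (trace (X ** Y ** Z) - trace (Z ** Y ** X))^2"

end

theory Submission
  imports Defs
begin

lemma mult_2: "((M::cmat2) ** N) $ i $ j = M$i$1 * N$1$j + M$i$2 * N$2$j"
  by (simp add: matrix_matrix_mult_def sum_2)

lemma trace_2: "trace (M::cmat2) = M$1$1 + M$2$2"
  by (simp add: trace_def sum_2)

lemma quad_root:
  fixes a b c :: complex
  shows "\<exists>p q. (p,q) \<noteq> (0,0) \<and> a*p^2+b*p*q+c*q^2 = 0"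
proof (cases "a = 0")
  case True
  then show ?thesis by (intro exI[of _ 1] exI[of _ 0]) simp
next
  case False
  define s where "s = csqrt (b^2 - 4*a*c)"
  have s2: "s^2 = b^2 - 4*a*c" unfolding s_def by simp
  define r where "r = (-b + s)/(2*a)"
  have "a*r^2+b*r*1+c*1^2 = 0"
    unfolding r_def using False s2 by (simp add: field_simps power2_eq_square) algebra
  then show ?thesis by (intro exI[of _ r] exI[of _ 1]) simp
qed

lemma resR:
  fixes a b c a' b' c' :: complex
  assumes R: "(a*c' - c*a')^2 - (a*b' - b*a')*(b*c' - c*b') = 0"
  shows "\<exists>p q. (p,q) \<noteq> (0,0) \<and> a*p^2+b*p*q+c*q^2 = 0 \<and> a'*p^2+b'*p*q+c'*q^2 = 0"
proof (cases "a = 0")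
  case False
  define s where "s = csqrt (b^2 - 4*a*c)"
  have s2: "s^2 = b^2 - 4*a*c" unfolding s_def by simp
  define r1 where "r1 = (-b + s)/(2*a)"
  define r2 where "r2 = (-b - s)/(2*a)"
  have e1: "b = - a*(r1+r2)" unfolding r1_def r2_def using False by (simp add: field_simps)
  have e2: "c = a*r1*r2" unfolding r1_def r2_def using False s2
    by (simp add: field_simps power2_eq_square) algebra
  have "(a*c' - c*a')^2 - (a*b' - b*a')*(b*c' - c*b') = a^2 * (a'*r1^2+b'*r1+c') * (a'*r2^2+b'*r2+c')"
    using e1 e2 by algebra
  with R False have "a'*r1^2+b'*r1+c' = 0 \<or> a'*r2^2+b'*r2+c' = 0" by simp
  moreover have "a*r1^2+b*r1+c = 0" "a*r2^2+b*r2+c = 0" using e1 e2 by algebra+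
  ultimately show ?thesis
    by (metis (no_types, lifting) mult_1 mult_1_right one_power2 prod.inject zero_neq_one)
next
  case a0: True
  show ?thesis
  proof (cases "b = 0 \<and> c = 0")
    case True
    obtain p q where "(p,q) \<noteq> (0,0)" "a'*p^2+b'*p*q+c'*q^2 = 0" using quad_root by blast
    then show ?thesis using True a0 by auto
  next
    case False
    have "(a*c' - c*a')^2 - (a*b' - b*a')*(b*c' - c*b') = a' * (a'*(-c)^2 + b'*(-c)*b + c'*b^2)"
      using a0 by algebra
    with R have "a' = 0 \<or> a'*(-c)^2 + b'*(-c)*b + c'*b^2 = 0" by simp
    moreover have "a*(-c)^2 + b*(-c)*b + c*b^2 = 0" using a0 by algebra
    ultimately show ?thesis
    proof (elim disjE)
      assume "a' = 0"
      then show ?thesis using a0 by (intro exI[of _ 1] exI[of _ 0]) simp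
    next
      assume h: "a'*(-c)^2 + b'*(-c)*b + c'*b^2 = 0" "a*(-c)^2 + b*(-c)*b + c*b^2 = 0"
      have "(-c, b) \<noteq> (0,0)" using False by auto
      then show ?thesis using h by (intro exI[of _ "-c"] exI[of _ b]) simp
    qed
  qed
qed

definition Res :: "complex \<Rightarrow> complex \<Rightarrow> complex \<Rightarrow> complex \<Rightarrow> complex \<Rightarrow> complex \<Rightarrow> complex" where
  "Res a b c a' b' c' = (a*c' - c*a')^2 - (a*b' - b*a')*(b*c' - c*b')"

definition ev3 :: "complex \<Rightarrow> complex \<Rightarrow> complex \<Rightarrow> complex \<Rightarrow> complex \<Rightarrow> complex" where
  "ev3 a b c p q = a*p^2+b*p*q+c*q^2"

lemma triple_root:
  fixes u11 u12 u13 u21 u22 u23 u31 u32 u33 :: complex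
  assumes r12: "Res u11 u12 u13 u21 u22 u23 = 0"
    and r13: "Res u11 u12 u13 u31 u32 u33 = 0"
    and r23: "Res u21 u22 u23 u31 u32 u33 = 0"
    and dt: "u11*(u22*u33-u23*u32) - u12*(u21*u33-u23*u31) + u13*(u21*u32-u22*u31) = 0"
  shows "\<exists>p q. (p,q) \<noteq> (0,0) \<and> ev3 u11 u12 u13 p q = 0 \<and> ev3 u21 u22 u23 p q = 0
            \<and> ev3 u31 u32 u33 p q = 0"
proof (cases "u12*u23-u13*u22 = 0 \<and> u13*u21-u11*u23 = 0 \<and> u11*u22-u12*u21 = 0")
  case False
  obtain p q where pq: "(p,q) \<noteq> (0,0)" "ev3 u11 u12 u13 p q = 0" "ev3 u21 u22 u23 p q = 0"
    using resR[OF r12[unfolded Res_def]] unfolding ev3_def by blast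
  have "(u12*u23-u13*u22) * ev3 u31 u32 u33 p q = 0"
    using pq(2,3) dt unfolding ev3_def by algebra
  moreover have "(u13*u21-u11*u23) * ev3 u31 u32 u33 p q = 0"
    using pq(2,3) dt unfolding ev3_def by algebra
  moreover have "(u11*u22-u12*u21) * ev3 u31 u32 u33 p q = 0"
    using pq(2,3) dt unfolding ev3_def by algebra
  ultimately have "ev3 u31 u32 u33 p q = 0" using False by auto
  then show ?thesis using pq by blast
next
  case cr: True
  show ?thesis
  proof (cases "u11 = 0 \<and> u12 = 0 \<and> u13 = 0")
    case True
    obtain p q where pq: "(p,q) \<noteq> (0,0)" "ev3 u21 u22 u23 p q = 0" "ev3 u31 u32 u33 p q = 0"
      using resR[OF r23[unfolded Res_def]] unfolding ev3_def by blast
    then show ?thesis using True unfolding ev3_def by auto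
  next
    case False
    obtain p q where pq: "(p,q) \<noteq> (0,0)" "ev3 u11 u12 u13 p q = 0" "ev3 u31 u32 u33 p q = 0"
      using resR[OF r13[unfolded Res_def]] unfolding ev3_def by blast
    have "u11 * ev3 u21 u22 u23 p q = 0"
      using pq(2) cr unfolding ev3_def by algebra
    moreover have "u12 * ev3 u21 u22 u23 p q = 0"
      using pq(2) cr unfolding ev3_def by algebra
    moreover have "u13 * ev3 u21 u22 u23 p q = 0"
      using pq(2) cr unfolding ev3_def by algebra
    ultimately have "ev3 u21 u22 u23 p q = 0" using False by auto
    then show ?thesis using pq by blast
  qed
qed

lemma sigma_Res: "sigma A B = Res (A$2$1) (A$2$2-A$1$1) (-A$1$2) (B$2$1) (B$2$2-B$1$1) (-B$1$2)"
  unfolding sigma_def tau_def trace_2 mult_2 Res_def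
  by (simp add: field_simps power2_eq_square)
lemma Delta_det: "Delta A B C = (let u11 = A$2$1; u12 = A$2$2-A$1$1; u13 = -A$1$2;
   u21 = B$2$1; u22 = B$2$2-B$1$1; u23 = -B$1$2; u31 = C$2$1; u32 = C$2$2-C$1$1; u33 = -C$1$2 in
   (u11*(u22*u33-u23*u32) - u12*(u21*u33-u23*u31) + u13*(u21*u32-u22*u31))^2)"
  unfolding Delta_def trace_2 mult_2 Let_def
  by algebra

lemma inv_props:
  assumes "invertible (P::cmat2)"
  shows "P ** matrix_inv P = mat 1 \<and> matrix_inv P ** P = mat 1"
  using assms unfolding invertible_def matrix_inv_def by (rule someI_ex)

lemma inv_unique:
  assumes "(P::cmat2) ** Q = mat 1" "Q ** P = mat 1"
  shows "invertible P \<and> matrix_inv P = Q"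
proof -
  have i: "invertible P" using assms unfolding invertible_def by blast
  then have h: "P ** matrix_inv P = mat 1 \<and> matrix_inv P ** P = mat 1" by (rule inv_props)
  have "matrix_inv P = matrix_inv P ** (P ** Q)" using assms by (simp add: matrix_mul_rid)
  also have "\<dots> = Q" using h by (simp add: matrix_mul_assoc matrix_mul_lid)
  finally show ?thesis using i by blast
qed

lemma conj_trace:
  assumes "(P::cmat2) ** Q = mat 1" "Q ** P = mat 1"
  shows "trace (P ** X ** Q) = trace X"
proof -
  have "trace (P ** X ** Q) = trace (Q ** (P ** X))" by (rule trace_mul_sym)
  also have "Q ** (P ** X) = (Q ** P) ** X" by (rule matrix_mul_assoc)
  then have "trace (Q ** (P ** X)) = trace X" using assms(2) by (simp add: matrix_mul_lid)
  finally show ?thesis .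
qed

lemma conj_mult:
  assumes "(P::cmat2) ** Q = mat 1" "Q ** P = mat 1"
  shows "(P ** X ** Q) ** (P ** Y ** Q) = P ** (X ** Y) ** Q"
proof -
  have "(P ** X ** Q) ** (P ** Y ** Q) = P ** X ** (Q ** P) ** Y ** Q"
    by (simp add: matrix_mul_assoc)
  then show ?thesis using assms(2) by (simp add: matrix_mul_assoc matrix_mul_rid)
qed

lemma conj_sigma:
  assumes "(P::cmat2) ** Q = mat 1" "Q ** P = mat 1"
  shows "sigma (P ** X ** Q) (P ** Y ** Q) = sigma X Y"
  unfolding sigma_def tau_def using conj_trace[OF assms] conj_mult[OF assms] by simp

lemma conj_Delta:
  assumes "(P::cmat2) ** Q = mat 1" "Q ** P = mat 1"
  shows "Delta (P ** X ** Q) (P ** Y ** Q) (P ** Z ** Q) = Delta X Y Z"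
  unfolding Delta_def using conj_trace[OF assms] conj_mult[OF assms] by simp

definition mk2 :: "complex \<Rightarrow> complex \<Rightarrow> complex \<Rightarrow> complex \<Rightarrow> cmat2" where
  "mk2 a b c d = (\<chi> i j. if i = 1 then (if j = 1 then a else b) else (if j = 1 then c else d))"

lemma mk2_simps[simp]: "mk2 a b c d $ 1 $ 1 = a" "mk2 a b c d $ 1 $ 2 = b"
  "mk2 a b c d $ 2 $ 1 = c" "mk2 a b c d $ 2 $ 2 = d"
  unfolding mk2_def by simp_all

lemma mat_eq2: "(M::cmat2) = N \<longleftrightarrow> M$1$1 = N$1$1 \<and> M$1$2 = N$1$2 \<and> M$2$1 = N$2$1 \<and> M$2$2 = N$2$2"
  by (auto simp: vec_eq_iff forall_2)

lemma mat1_simps: "(mat 1 :: cmat2) $ 1 $ 1 = 1" "(mat 1 :: cmat2) $ 1 $ 2 = 0"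
  "(mat 1 :: cmat2) $ 2 $ 1 = 0" "(mat 1 :: cmat2) $ 2 $ 2 = 1"
  by (simp_all add: mat_def)

lemma upper_sigma: "B$2$1 = 0 \<Longrightarrow> C$2$1 = 0 \<Longrightarrow> sigma B C = 0"
  by (simp add: sigma_Res Res_def)

lemma upper_Delta: "B$2$1 = 0 \<Longrightarrow> C$2$1 = 0 \<Longrightarrow> D$2$1 = 0 \<Longrightarrow> Delta B C D = 0"
  by (simp add: Delta_det Let_def)

lemma entry_p:
  assumes "p \<noteq> 0"
  shows "(mk2 (1/p) 0 (-q/p) 1 ** A ** mk2 p 0 q 1) $ 2 $ 1 = ev3 (A$2$1) (A$2$2-A$1$1) (-A$1$2) p q / p"
  using assms by (simp add: mult_2 ev3_def field_simps power2_eq_square)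

lemma entry_0:
  shows "(mk2 0 1 1 0 ** A ** mk2 0 1 1 0) $ 2 $ 1 = A$1$2"
  by (simp add: mult_2)

lemma make_upper:
  assumes pq: "(p,q) \<noteq> (0,0)"
    and e1: "ev3 (A1$2$1) (A1$2$2-A1$1$1) (-A1$1$2) p q = 0"
    and e2: "ev3 (A2$2$1) (A2$2$2-A2$1$1) (-A2$1$2) p q = 0"
    and e3: "ev3 (A3$2$1) (A3$2$2-A3$1$1) (-A3$1$2) p q = 0"
  shows "\<exists>B. similar3 (A1, A2, A3) B \<and> upper_tri3 B"
proof (cases "p = 0")
  case False
  define P where "P = mk2 (1/p) 0 (-q/p) 1"
  define Q where "Q = mk2 p 0 q 1"
  have PQ: "P ** Q = mat 1" "Q ** P = mat 1" unfolding P_def Q_def using False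
    by (simp_all add: mat_eq2 mult_2 mat1_simps field_simps)
  from inv_unique[OF PQ] have iv: "invertible P" "matrix_inv P = Q" by auto
  show ?thesis
    apply (rule exI[of _ "(P ** A1 ** matrix_inv P, P ** A2 ** matrix_inv P, P ** A3 ** matrix_inv P)"])
    using iv entry_p[OF False, of q A1] entry_p[OF False, of q A2] entry_p[OF False, of q A3] e1 e2 e3
    unfolding upper_tri3_def upper_tri2_def similar3_def P_def[symmetric] Q_def[symmetric]
    by auto
next
  case True
  then have q: "q \<noteq> 0" using pq by auto
  have z: "A1$1$2 = 0" "A2$1$2 = 0" "A3$1$2 = 0" using e1 e2 e3 True q by (simp_all add: ev3_def)
  define P where "P = mk2 0 1 1 0"
  have PQ: "P ** P = mat 1" unfolding P_def
    by (simp_all add: mat_eq2 mult_2 mat1_simps)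
  from inv_unique[OF PQ PQ] have iv: "invertible P" "matrix_inv P = P" by auto
  show ?thesis
    apply (rule exI[of _ "(P ** A1 ** matrix_inv P, P ** A2 ** matrix_inv P, P ** A3 ** matrix_inv P)"])
    using iv z unfolding upper_tri3_def upper_tri2_def similar3_def
    by (auto simp only: P_def entry_0 fst_conv snd_conv)
qed

theorem corollary2p11:
  fixes A1 A2 A3 :: cmat2
  shows "(\<exists>B. similar3 (A1, A2, A3) B \<and> upper_tri3 B) \<longleftrightarrow>
    (sigma A1 A2 = 0 \<and> sigma A1 A3 = 0 \<and> sigma A2 A3 = 0 \<and> Delta A1 A2 A3 = 0)"
proof
  assume "\<exists>B. similar3 (A1, A2, A3) B \<and> upper_tri3 B"
  then obtain B1 B2 B3 P where iv: "invertible P"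
    and b: "B1 = P ** A1 ** matrix_inv P" "B2 = P ** A2 ** matrix_inv P" "B3 = P ** A3 ** matrix_inv P"
    and u: "B1$(2::2)$1 = 0" "B2$(2::2)$1 = 0" "B3$(2::2)$1 = 0"
    unfolding similar3_def upper_tri3_def upper_tri2_def by auto
  have PQ: "P ** matrix_inv P = mat 1" "matrix_inv P ** P = mat 1" using inv_props[OF iv] by auto
  show "sigma A1 A2 = 0 \<and> sigma A1 A3 = 0 \<and> sigma A2 A3 = 0 \<and> Delta A1 A2 A3 = 0"
    using conj_sigma[OF PQ] conj_Delta[OF PQ] upper_sigma upper_Delta u b by metis
next
  assume h: "sigma A1 A2 = 0 \<and> sigma A1 A3 = 0 \<and> sigma A2 A3 = 0 \<and> Delta A1 A2 A3 = 0"
  have "\<exists>p q. (p,q) \<noteq> (0,0) \<and> ev3 (A1$2$1) (A1$2$2-A1$1$1) (-A1$1$2) p q = 0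
     \<and> ev3 (A2$2$1) (A2$2$2-A2$1$1) (-A2$1$2) p q = 0 \<and> ev3 (A3$2$1) (A3$2$2-A3$1$1) (-A3$1$2) p q = 0"
    apply (rule triple_root)
    using h by (simp_all add: sigma_Res Delta_det Let_def)
  then show "\<exists>B. similar3 (A1, A2, A3) B \<and> upper_tri3 B" using make_upper by blast
qed

end
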